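(* Fix an integer $k\ge 3$, and let $N$ range over positive integers divisible by $\mathrm{lcm}\{2,k\}$. Let $\alpha$ be a random permutation uniformly distributed on the conjugacy class $[2^{N/2}]$ of the symmetric group $S_N$, and let $\beta$ be a fixed permutation in the conjugacy class $[k^{N/k}]$. Then, as $N\to\infty$, $$\Pr[C_{\alpha\beta}\ge t] = O\left(\left(\tfrac{2}{3}\right)^{t/2} N\right),$$ with the implied constant independent of $N$ and $t$.
   Context: For a permutation $\pi$ of $\{1,\ldots,N\}$, $C_\pi$ denotes the number of cycles of $\pi$. The conjugacy class $[2^{N/2}]$ consists of the permutations of $\{1,\ldots,N\}$ all of whose cycles have length $2$; $[k^{N/k}]$ consists of the permutations all of whose cycles have length $k$. The product $\alpha\beta$ denotes the permutation obtained by first performing $\alpha$ and then $\beta$. *)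

theory Defs
  imports Complex_Main "HOL-Combinatorics.Combinatorics"
begin

(* number of cycles of a permutation p of {1..N} (fixed points count as cycles) *)
definition num_cycles :: "nat \<Rightarrow> (nat \<Rightarrow> nat) \<Rightarrow> nat" where
  "num_cycles N p = card ((\<lambda>x. orbit p x) ` {1..N})"

(* the conjugacy class [m^(N/m)] of S_N: permutations of {1..N} all of whose cycles have length m *)
definition cyc_class :: "nat \<Rightarrow> nat \<Rightarrow> (nat \<Rightarrow> nat) set" where
  "cyc_class N m = {p. p permutes {1..N} \<and> (\<forall>x\<in>{1..N}. card (orbit p x) = m)}"

(* Pr[C_{alpha beta} >= t] for alpha uniform on [2^(N/2)]; alpha beta = first alpha then beta *)
definition prob_cycles_ge :: "nat \<Rightarrow> (nat \<Rightarrow> nat) \<Rightarrow> nat \<Rightarrow> real" where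
  "prob_cycles_ge N \<beta> t =
     real (card {\<alpha> \<in> cyc_class N 2. num_cycles N (\<beta> \<circ> \<alpha>) \<ge> t}) / real (card (cyc_class N 2))"

end

theory Submission
  imports Defs
begin


definition match :: "'a set \<Rightarrow> ('a \<Rightarrow> 'a) \<Rightarrow> bool" where
  "match T \<alpha> \<longleftrightarrow> \<alpha> permutes T \<and> (\<forall>x\<in>T. \<alpha> x \<noteq> x \<and> \<alpha> (\<alpha> x) = x)"

definition MS :: "'a set \<Rightarrow> ('a \<Rightarrow> 'a) set" where "MS T = {\<alpha>. match T \<alpha>}"

lemma MS_empty: "MS {} = {id}"
  by (auto simp: MS_def match_def)

lemma match_ins:
  assumes m: "match T' \<alpha>'" and "a \<notin> T'" "b \<notin> T'" "a \<noteq> b"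
  shows "match (insert a (insert b T')) (transpose a b \<circ> \<alpha>')"
proof -
  have p: "\<alpha>' permutes T'" using m by (simp add: match_def)
  have pa: "\<alpha>' a = a" "\<alpha>' b = b" using p assms by (auto intro: permutes_not_in)
  have "\<alpha>' permutes insert a (insert b T')" using p by (rule permutes_subset) auto
  moreover have "transpose a b permutes insert a (insert b T')" by (rule permutes_swap_id) auto
  ultimately have "transpose a b \<circ> \<alpha>' permutes insert a (insert b T')"
    by (rule permutes_compose)
  moreover have "\<forall>x\<in>insert a (insert b T'). (transpose a b \<circ> \<alpha>') x \<noteq> x \<and>
      (transpose a b \<circ> \<alpha>') ((transpose a b \<circ> \<alpha>') x) = x"
  proof
    fix x assume x: "x \<in> insert a (insert b T')"
    show "(transpose a b \<circ> \<alpha>') x \<noteq> x \<and> (transpose a b \<circ> \<alpha>') ((transpose a b \<circ> \<alpha>') x) = x"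
    proof (cases "x \<in> T'")
      case True
      then have "\<alpha>' x \<in> T'" "\<alpha>' (\<alpha>' x) = x" "\<alpha>' x \<noteq> x" using m p by (auto simp: match_def permutes_in_image)
      then show ?thesis using assms True by (auto simp: transpose_def)
    next
      case False
      then show ?thesis using x pa assms by (auto simp: transpose_def)
    qed
  qed
  ultimately show ?thesis by (simp add: match_def)
qed

lemma match_del:
  assumes m: "match T \<alpha>" and a: "a \<in> T"
  shows "match (T - {a, \<alpha> a}) (transpose a (\<alpha> a) \<circ> \<alpha>)"
    "\<alpha> = transpose a (\<alpha> a) \<circ> (transpose a (\<alpha> a) \<circ> \<alpha>)"
    "\<alpha> a \<in> T" "\<alpha> a \<noteq> a"
proof -
  define b where "b = \<alpha> a"
  have p: "\<alpha> permutes T" using m by (simp add: match_def)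
  have bT: "b \<in> T" using p a by (simp add: b_def permutes_in_image)
  have ba: "b \<noteq> a" "\<alpha> b = a" using m a by (auto simp: match_def b_def)
  have "transpose a b permutes T" using a bT by (rule permutes_swap_id)
  with p have "transpose a b \<circ> \<alpha> permutes T" by (rule permutes_compose)
  then have pp: "transpose a b \<circ> \<alpha> permutes (T - {a,b})"
    by (rule permutes_superset) (use ba b_def in auto)
  have "\<forall>x\<in>T - {a,b}. (transpose a b \<circ> \<alpha>) x \<noteq> x \<and>
      (transpose a b \<circ> \<alpha>) ((transpose a b \<circ> \<alpha>) x) = x"
  proof
    fix x assume x: "x \<in> T - {a,b}"
    then have "\<alpha> x \<noteq> a" "\<alpha> x \<noteq> b" "\<alpha> (\<alpha> x) = x" "\<alpha> x \<noteq> x"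
      using m ba b_def by (auto simp: match_def)
    then show "(transpose a b \<circ> \<alpha>) x \<noteq> x \<and> (transpose a b \<circ> \<alpha>) ((transpose a b \<circ> \<alpha>) x) = x"
      using x by (auto simp: transpose_def)
  qed
  with pp show "match (T - {a, \<alpha> a}) (transpose a (\<alpha> a) \<circ> \<alpha>)" by (simp add: match_def b_def)
  show "\<alpha> = transpose a (\<alpha> a) \<circ> (transpose a (\<alpha> a) \<circ> \<alpha>)"
    by (simp add: fun_eq_iff)
  show "\<alpha> a \<in> T" "\<alpha> a \<noteq> a" using bT ba by (auto simp: b_def)
qed



lemma finite_MS: "finite T \<Longrightarrow> finite (MS T)"
  by (rule finite_subset[OF _ finite_permutations[of T]]) (auto simp: MS_def match_def)

lemma MS_decomp:
  assumes "finite T" "a \<in> T"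
  shows "MS T = (\<Union>b\<in>T-{a}. (\<lambda>\<alpha>'. transpose a b \<circ> \<alpha>') ` MS (T-{a,b}))"
proof (intro set_eqI iffI)
  fix \<alpha> assume "\<alpha> \<in> MS T"
  then have m: "match T \<alpha>" by (simp add: MS_def)
  note md = match_del[OF m assms(2)]
  show "\<alpha> \<in> (\<Union>b\<in>T-{a}. (\<lambda>\<alpha>'. transpose a b \<circ> \<alpha>') ` MS (T-{a,b}))"
    using md by (auto simp: MS_def intro!: bexI[of _ "\<alpha> a"])
next
  fix \<alpha> assume "\<alpha> \<in> (\<Union>b\<in>T-{a}. (\<lambda>\<alpha>'. transpose a b \<circ> \<alpha>') ` MS (T-{a,b}))"
  then obtain b \<alpha>' where b: "b \<in> T" "b \<noteq> a" and m: "match (T-{a,b}) \<alpha>'" and e: "\<alpha> = transpose a b \<circ> \<alpha>'"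
    by (auto simp: MS_def)
  have "match (insert a (insert b (T-{a,b}))) (transpose a b \<circ> \<alpha>')"
    by (rule match_ins[OF m]) (use b in auto)
  moreover have "insert a (insert b (T-{a,b})) = T" using b assms by auto
  ultimately show "\<alpha> \<in> MS T" using e by (simp add: MS_def)
qed

lemma match_fix: "match T' \<alpha>' \<Longrightarrow> a \<notin> T' \<Longrightarrow> \<alpha>' a = a"
  by (auto simp: match_def intro: permutes_not_in)

lemma sum_MS:
  assumes "finite T" "a \<in> T"
  shows "(\<Sum>\<alpha>\<in>MS T. g \<alpha>) = (\<Sum>b\<in>T-{a}. \<Sum>\<alpha>'\<in>MS (T-{a,b}). g (transpose a b \<circ> \<alpha>'))"
proof -
  have "(\<Sum>\<alpha>\<in>MS T. g \<alpha>) = (\<Sum>b\<in>T-{a}. sum g ((\<lambda>\<alpha>'. transpose a b \<circ> \<alpha>') ` MS (T-{a,b})))"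
    unfolding MS_decomp[OF assms]
  proof (rule sum.UNION_disjoint)
    show "finite (T - {a})" using assms by simp
    show "\<forall>i\<in>T - {a}. finite ((\<circ>) (transpose a i) ` MS (T - {a, i}))"
      using assms by (auto intro: finite_MS)
    show "\<forall>i\<in>T - {a}. \<forall>j\<in>T - {a}. i \<noteq> j \<longrightarrow>
        (\<circ>) (transpose a i) ` MS (T - {a, i}) \<inter> (\<circ>) (transpose a j) ` MS (T - {a, j}) = {}"
    proof (intro ballI impI)
      fix i j assume ij: "i \<in> T - {a}" "j \<in> T - {a}" "i \<noteq> j"
      { fix \<alpha>1 \<alpha>2 assume "\<alpha>1 \<in> MS (T-{a,i})" "\<alpha>2 \<in> MS (T-{a,j})"
          "transpose a i \<circ> \<alpha>1 = transpose a j \<circ> \<alpha>2"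
        then have "(transpose a i \<circ> \<alpha>1) a = (transpose a j \<circ> \<alpha>2) a" by simp
        moreover have "\<alpha>1 a = a" "\<alpha>2 a = a" using \<open>\<alpha>1 \<in> _\<close> \<open>\<alpha>2 \<in> _\<close>
          by (auto simp: MS_def intro!: match_fix)
        ultimately have False using ij by simp }
      then show "(\<circ>) (transpose a i) ` MS (T - {a, i}) \<inter> (\<circ>) (transpose a j) ` MS (T - {a, j}) = {}"
        by blast
    qed
  qed
  also have "\<dots> = (\<Sum>b\<in>T-{a}. \<Sum>\<alpha>'\<in>MS (T-{a,b}). g (transpose a b \<circ> \<alpha>'))"
  proof (rule sum.cong[OF refl])
    fix b
    have "inj_on (\<lambda>\<alpha>'. transpose a b \<circ> \<alpha>') (MS (T-{a,b}))"
      by (rule inj_onI) (metis comp_assoc transpose_comp_involutory id_comp)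
    then show "sum g ((\<lambda>\<alpha>'. transpose a b \<circ> \<alpha>') ` MS (T-{a,b})) =
        (\<Sum>\<alpha>'\<in>MS (T-{a,b}). g (transpose a b \<circ> \<alpha>'))"
      by (simp add: sum.reindex)
  qed
  finally show ?thesis .
qed

fun dfact :: "nat \<Rightarrow> nat" where
  "dfact 0 = 1" | "dfact (Suc 0) = 0" | "dfact (Suc (Suc n)) = Suc n * dfact n"

lemma card_MS: "finite T \<Longrightarrow> card (MS T) = dfact (card T)"
proof (induction "card T" arbitrary: T rule: less_induct)
  case less
  show ?case
  proof (cases "T = {}")
    case True then show ?thesis by (simp add: MS_empty)
  next
    case False
    then obtain a where a: "a \<in> T" by auto
    have "card (MS T) = (\<Sum>\<alpha>\<in>MS T. 1)" by simp
    also have "\<dots> = (\<Sum>b\<in>T-{a}. \<Sum>\<alpha>'\<in>MS (T-{a,b}). 1)"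
      by (rule sum_MS[OF less.prems a])
    also have "\<dots> = (\<Sum>b\<in>T-{a}. dfact (card T - 2))"
    proof (rule sum.cong[OF refl])
      fix b assume b: "b \<in> T - {a}"
      have c: "card (T-{a,b}) = card T - 2" using b a less.prems
        by (auto simp: card_Diff_subset card_insert_if numeral_2_eq_2)
      have "card (T-{a,b}) < card T" using b a less.prems by (simp add: c) (metis card_gt_0_iff diff_less empty_iff zero_less_numeral)
      then have "card (MS (T-{a,b})) = dfact (card (T-{a,b}))"
        using less by auto
      then show "(\<Sum>\<alpha>'\<in>MS (T-{a,b}). 1) = dfact (card T - 2)" by (simp add: c)
    qed
    also have "\<dots> = (card T - 1) * dfact (card T - 2)"
      using a less.prems by simp
    also have "\<dots> = dfact (card T)"
    proof -
      obtain n where n: "card T = Suc n" using a less.prems by (metis card_Suc_Diff1)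
      show ?thesis by (cases n) (auto simp: n)
    qed
    finally show ?thesis .
  qed
qed



lemma orbit_same:
  assumes "permutation f" "z \<in> orbit f y" shows "orbit f z = orbit f y"
  using assms cyclic_on_orbit' orbit_cyclic_eq3 by metis

lemma orbit_self: "permutation f \<Longrightarrow> y \<in> orbit f y"
  by (rule permutation_self_in_orbit)

locale tsetup =
  fixes S :: "'a set" and f :: "'a \<Rightarrow> 'a" and a b :: 'a
  assumes fS: "finite S" and fp: "f permutes S" and aS: "a \<in> S" and bS: "b \<in> S" and ab: "a \<noteq> b"
begin

definition "\<sigma> = f \<circ> transpose a b"

lemma sp: "\<sigma> permutes S"
  unfolding \<sigma>_def by (rule permutes_compose[OF permutes_swap_id[OF aS bS] fp])

lemma perm_f: "permutation f" using fp fS permutation_permutes by blast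
lemma perm_s: "permutation \<sigma>" using sp fS permutation_permutes by blast

lemma orbit_untouched:
  assumes "a \<notin> orbit f y" "b \<notin> orbit f y"
  shows "orbit \<sigma> y = orbit f y"
proof (rule orbit_cong)
  show "y \<in> orbit f y" by (rule orbit_self[OF perm_f])
  fix s assume "s \<in> orbit f y"
  then show "\<sigma> s = f s" using assms by (auto simp: \<sigma>_def transpose_def)
qed

end



definition orbs :: "'a set \<Rightarrow> ('a \<Rightarrow> 'a) \<Rightarrow> 'a set set" where
  "orbs S F = (\<lambda>x. orbit F x) ` S"

locale tsplit = tsetup +
  assumes bo: "b \<in> orbit f a"
begin

definition "p = funpow_dist1 f a a"
definition "g i = (f ^^ i) a"

lemma ao: "a \<in> orbit f a" by (rule orbit_self[OF perm_f])
lemma fpa: "g p = a" unfolding g_def p_def by (rule funpow_dist1_prop[OF ao])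
lemma p_pos: "0 < p" by (simp add: p_def)
lemma A_img: "orbit f a = g ` {0..<p}"
  unfolding g_def p_def by (rule orbit_conv_funpow_dist1[OF ao])
lemma g_inj: "inj_on g {0..<p}"
  unfolding g_def p_def by (rule inj_on_funpow_dist1[OF ao])
lemma g0: "g 0 = a" by (simp add: g_def)

definition "d = (SOME d. d < p \<and> g d = b)"
lemma d_prop: "d < p" "g d = b"
proof -
  have "\<exists>d. d < p \<and> g d = b" using bo A_img by auto
  then have "d < p \<and> g d = b" unfolding d_def by (rule someI_ex)
  then show "d < p" "g d = b" by auto
qed
lemma d_pos: "0 < d" using d_prop g0 ab by (cases d) auto

lemma g_ne_a: "0 < i \<Longrightarrow> i < p \<Longrightarrow> g i \<noteq> a"
  using inj_onD[OF g_inj, of i 0] g0 p_pos by auto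
lemma g_ne_b: "i < p \<Longrightarrow> i \<noteq> d \<Longrightarrow> g i \<noteq> b"
  using inj_onD[OF g_inj, of i d] d_prop by auto
lemma g_Suc: "f (g i) = g (Suc i)" by (simp add: g_def)

lemma iter_b: "1 \<le> i \<Longrightarrow> i \<le> d \<Longrightarrow> (\<sigma> ^^ i) b = g i"
proof (induction i)
  case 0 then show ?case by simp
next
  case (Suc i)
  show ?case
  proof (cases "i = 0")
    case True then show ?thesis by (simp add: \<sigma>_def g_def)
  next
    case False
    then have "(\<sigma> ^^ i) b = g i" using Suc by simp
    moreover have "g i \<noteq> a" using g_ne_a[of i] False Suc.prems d_prop(1) by simp
    moreover have "g i \<noteq> b" using g_ne_b[of i] Suc.prems d_prop(1) by simp
    ultimately have "\<sigma> ((\<sigma> ^^ i) b) = g (Suc i)" by (simp add: \<sigma>_def g_Suc)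
    then show ?thesis by simp
  qed
qed

lemma iter_a: "1 \<le> i \<Longrightarrow> i \<le> p - d \<Longrightarrow> (\<sigma> ^^ i) a = g (d + i)"
proof (induction i)
  case 0 then show ?case by simp
next
  case (Suc i)
  show ?case
  proof (cases "i = 0")
    case True then show ?thesis using d_prop by (simp add: \<sigma>_def g_Suc[symmetric])
  next
    case False
    then have "(\<sigma> ^^ i) a = g (d + i)" using Suc by simp
    moreover have "g (d+i) \<noteq> a" using g_ne_a[of "d+i"] False Suc.prems d_prop(1) by simp
    moreover have "g (d+i) \<noteq> b" using g_ne_b[of "d+i"] False Suc.prems d_prop(1) by simp
    ultimately have "\<sigma> ((\<sigma> ^^ i) a) = g (Suc (d + i))" by (simp add: \<sigma>_def g_Suc)
    then show ?thesis by simp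
  qed
qed

definition "Ia = insert 0 {d+1..<p}"
definition "Ib = {1..d}"

lemma Pb_img: "orbit \<sigma> b = g ` Ib"
proof -
  have "(\<sigma> ^^ d) b = b" using iter_b[of d] d_pos d_prop by simp
  then have "orbit \<sigma> b = {(\<sigma> ^^ m) b | m. m < d}" using d_pos by (rule orbit_altdef_bounded)
  also have "\<dots> = g ` Ib"
  proof (intro set_eqI iffI)
    fix x assume "x \<in> {(\<sigma> ^^ m) b | m. m < d}"
    then obtain m where m: "m < d" "x = (\<sigma> ^^ m) b" by auto
    show "x \<in> g ` Ib"
    proof (cases "m = 0")
      case True then show ?thesis using m d_prop d_pos imageI[of d Ib g] by (auto simp: Ib_def)
    next
      case False then show ?thesis using m iter_b[of m] by (auto simp: Ib_def)
    qed
  next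
    fix x assume "x \<in> g ` Ib"
    then obtain i where i: "1 \<le> i" "i \<le> d" "x = g i" by (auto simp: Ib_def)
    show "x \<in> {(\<sigma> ^^ m) b | m. m < d}"
    proof (cases "i = d")
      case True then show ?thesis using i d_prop d_pos by (auto intro!: exI[of _ 0])
    next
      case False then show ?thesis using i iter_b[of i] by (auto intro!: exI[of _ i])
    qed
  qed
  finally show ?thesis .
qed

lemma Pa_img: "orbit \<sigma> a = g ` Ia"
proof -
  have pd: "0 < p - d" using d_prop by simp
  have "(\<sigma> ^^ (p - d)) a = a" using iter_a[of "p - d"] pd d_prop fpa by simp
  then have "orbit \<sigma> a = {(\<sigma> ^^ m) a | m. m < p - d}" using pd by (rule orbit_altdef_bounded)
  also have "\<dots> = g ` Ia"
  proof (intro set_eqI iffI)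
    fix x assume "x \<in> {(\<sigma> ^^ m) a | m. m < p - d}"
    then obtain m where m: "m < p - d" "x = (\<sigma> ^^ m) a" by auto
    show "x \<in> g ` Ia"
    proof (cases "m = 0")
      case True then show ?thesis using m g0 by (auto simp: Ia_def)
    next
      case False then show ?thesis using m iter_a[of m] by (auto simp: Ia_def)
    qed
  next
    fix x assume "x \<in> g ` Ia"
    then obtain i where i0: "i \<in> Ia" "x = g i" by auto
    then have i: "i = 0 \<or> (d + 1 \<le> i \<and> i < p)" "x = g i" by (auto simp: Ia_def)
    show "x \<in> {(\<sigma> ^^ m) a | m. m < p - d}"
    proof (cases "i = 0")
      case True then show ?thesis using i g0 pd by (auto intro!: exI[of _ 0])
    next
      case False 
      then have "(\<sigma> ^^ (i - d)) a = g i" using i iter_a[of "i - d"] by auto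
      then show ?thesis using i False by (auto intro!: exI[of _ "i - d"])
    qed
  qed
  finally show ?thesis .
qed

lemma Ia_sub: "Ia \<subseteq> {0..<p}" and Ib_sub: "Ib \<subseteq> {0..<p}" and IaIb: "Ia \<inter> Ib = {}"
  and IaIb_un: "Ia \<union> Ib = {0..<p}"
  using d_prop d_pos by (auto simp: Ia_def Ib_def)

lemma PaPb_un: "orbit \<sigma> a \<union> orbit \<sigma> b = orbit f a"
  by (simp add: Pa_img Pb_img A_img image_Un[symmetric] IaIb_un)

lemma PaPb_disj: "orbit \<sigma> a \<inter> orbit \<sigma> b = {}"
  using inj_on_image_Int[OF g_inj Ia_sub Ib_sub] IaIb by (simp add: Pa_img Pb_img)

lemma a_Pa: "a \<in> orbit \<sigma> a" by (rule orbit_self[OF perm_s])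
lemma b_Pb: "b \<in> orbit \<sigma> b" by (rule orbit_self[OF perm_s])

lemma orbs_split:
  "orbs S \<sigma> = insert (orbit \<sigma> a) (insert (orbit \<sigma> b) (orbs S f - {orbit f a}))"
proof (intro set_eqI iffI)
  fix c assume "c \<in> orbs S \<sigma>"
  then obtain y where y: "y \<in> S" "c = orbit \<sigma> y" by (auto simp: orbs_def)
  show "c \<in> insert (orbit \<sigma> a) (insert (orbit \<sigma> b) (orbs S f - {orbit f a}))"
  proof (cases "y \<in> orbit f a")
    case True
    then have "y \<in> orbit \<sigma> a \<or> y \<in> orbit \<sigma> b" using PaPb_un by auto
    then show ?thesis using y orbit_same[OF perm_s] by auto
  next
    case False
    have na: "a \<notin> orbit f y" using False orbit_same[OF perm_f, of a y] orbit_self[OF perm_f, of y] by auto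
    have nb: "b \<notin> orbit f y" using False orbit_same[OF perm_f, of b y] orbit_same[OF perm_f, of b a] bo orbit_self[OF perm_f, of y] by auto
    have "orbit f y \<noteq> orbit f a" using False orbit_self[OF perm_f, of y] by auto
    then show ?thesis using orbit_untouched[OF na nb] y by (auto simp: orbs_def)
  qed
next
  fix c assume c: "c \<in> insert (orbit \<sigma> a) (insert (orbit \<sigma> b) (orbs S f - {orbit f a}))"
  show "c \<in> orbs S \<sigma>"
  proof (cases "c = orbit \<sigma> a \<or> c = orbit \<sigma> b")
    case True then show ?thesis using aS bS by (auto simp: orbs_def)
  next
    case False
    then obtain y where y: "y \<in> S" "c = orbit f y" "orbit f y \<noteq> orbit f a" using c by (auto simp: orbs_def)
    have "y \<notin> orbit f a" using y orbit_same[OF perm_f, of y a] by auto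
    then have na: "a \<notin> orbit f y" and nb: "b \<notin> orbit f y"
      using orbit_same[OF perm_f, of a y] orbit_same[OF perm_f, of b y] orbit_same[OF perm_f, of b a] bo orbit_self[OF perm_f, of y] by auto
    show ?thesis using orbit_untouched[OF na nb] y by (auto simp: orbs_def)
  qed
qed

lemma rest_avoid: "c \<in> orbs S f - {orbit f a} \<Longrightarrow> a \<notin> c \<and> b \<notin> c"
proof -
  assume c: "c \<in> orbs S f - {orbit f a}"
  then obtain y where y: "c = orbit f y" "c \<noteq> orbit f a" by (auto simp: orbs_def)
  then show ?thesis using orbit_same[OF perm_f, of a y] orbit_same[OF perm_f, of b y] orbit_same[OF perm_f, of b a] bo by auto
qed

lemma Pa_notin: "orbit \<sigma> a \<notin> orbs S f - {orbit f a}"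
  using rest_avoid a_Pa by blast
lemma Pb_notin: "orbit \<sigma> b \<notin> orbs S f - {orbit f a}"
  using rest_avoid b_Pb by blast
lemma Pa_ne_Pb: "orbit \<sigma> a \<noteq> orbit \<sigma> b"
  using PaPb_disj a_Pa by auto

end



definition pset :: "'a set \<Rightarrow> 'a set set \<Rightarrow> 'a set set" where
  "pset T C = {c \<in> C. card (c \<inter> T) \<le> 2}"
definition pot :: "'a set \<Rightarrow> 'a set \<Rightarrow> ('a \<Rightarrow> 'a) \<Rightarrow> nat" where
  "pot S T F = card (pset T (orbs S F))"
definition ind :: "nat \<Rightarrow> nat" where "ind n = (if n \<le> 2 then 1 else 0)"

lemma card_pset_insert:
  assumes "finite C" "X \<notin> C"
  shows "card (pset T (insert X C)) = card (pset T C) + ind (card (X \<inter> T))"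
proof (cases "card (X \<inter> T) \<le> 2")
  case True
  then have "pset T (insert X C) = insert X (pset T C)" by (auto simp: pset_def)
  moreover have "finite (pset T C)" "X \<notin> pset T C" using assms by (auto simp: pset_def)
  ultimately show ?thesis using True by (simp add: ind_def)
next
  case False
  then have "pset T (insert X C) = pset T C" by (auto simp: pset_def)
  then show ?thesis using False by (simp add: ind_def)
qed

lemma pset_cong: "(\<And>c. c \<in> C \<Longrightarrow> c \<inter> T' = c \<inter> T) \<Longrightarrow> pset T' C = pset T C"
  by (auto simp: pset_def)

lemma finite_orbs: "finite S \<Longrightarrow> finite (orbs S F)" by (simp add: orbs_def)

lemma orbs_in: "x \<in> S \<Longrightarrow> orbit F x \<in> orbs S F" by (simp add: orbs_def)

context tsplit
begin

lemma d_unique: "i < p \<Longrightarrow> g i = b \<Longrightarrow> d = i"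
  using inj_onD[OF g_inj, of i d] d_prop by auto

lemma A_sub: "orbit f a \<subseteq> S" using permutes_orbit_subset[OF fp aS] .

lemma Pb_T:
  "orbit \<sigma> b \<inter> (T - {a,b}) = g ` {j \<in> {1..<p}. g j \<in> T \<and> j < d}"
proof (intro set_eqI iffI)
  fix x assume "x \<in> orbit \<sigma> b \<inter> (T - {a,b})"
  then obtain j where j: "j \<in> Ib" "x = g j" "x \<in> T" "x \<noteq> a" "x \<noteq> b" unfolding Pb_img by auto
  then have "j \<noteq> d" using d_prop by auto
  then have "j \<in> {j \<in> {1..<p}. g j \<in> T \<and> j < d}" using j d_prop by (auto simp: Ib_def)
  then show "x \<in> g ` {j \<in> {1..<p}. g j \<in> T \<and> j < d}" using j by auto
next
  fix x assume "x \<in> g ` {j \<in> {1..<p}. g j \<in> T \<and> j < d}"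
  then obtain j where j: "1 \<le> j" "j < p" "g j \<in> T" "j < d" "x = g j" by auto
  have "g j \<noteq> a" using g_ne_a[of j] j by simp
  moreover have "g j \<noteq> b" using g_ne_b[of j] j by simp
  moreover have "g j \<in> orbit \<sigma> b" unfolding Pb_img using j by (auto simp: Ib_def)
  ultimately show "x \<in> orbit \<sigma> b \<inter> (T - {a,b})" using j by auto
qed

lemma card_Pb_T:
  "card (orbit \<sigma> b \<inter> (T - {a,b})) = card {j \<in> {1..<p}. g j \<in> T \<and> j < d}"
  unfolding Pb_T by (rule card_image) (rule inj_on_subset[OF g_inj], auto)

lemma card_split:
  assumes "a \<in> T" "b \<in> T"
  shows "card (orbit f a \<inter> T) = card (orbit \<sigma> a \<inter> (T - {a,b})) + card (orbit \<sigma> b \<inter> (T - {a,b})) + 2"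
proof -
  have fin: "finite (orbit f a)" using A_sub fS finite_subset by blast
  have f1: "finite (orbit \<sigma> a)" "finite (orbit \<sigma> b)" using fin PaPb_un by (auto intro: finite_subset)
  have bPa: "b \<notin> orbit \<sigma> a" and aPb: "a \<notin> orbit \<sigma> b" using PaPb_disj a_Pa b_Pb by auto
  have e1: "orbit \<sigma> a \<inter> T = insert a (orbit \<sigma> a \<inter> (T - {a,b}))" using a_Pa bPa assms by auto
  have e2: "orbit \<sigma> b \<inter> T = insert b (orbit \<sigma> b \<inter> (T - {a,b}))" using b_Pb aPb assms by auto
  have "orbit f a \<inter> T = (orbit \<sigma> a \<inter> T) \<union> (orbit \<sigma> b \<inter> T)" using PaPb_un by auto
  then have "card (orbit f a \<inter> T) = card (orbit \<sigma> a \<inter> T) + card (orbit \<sigma> b \<inter> T)"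
    using PaPb_disj f1 by (simp add: card_Un_disjoint disjoint_iff)
  also have "\<dots> = card (orbit \<sigma> a \<inter> (T - {a,b})) + 1 + (card (orbit \<sigma> b \<inter> (T - {a,b})) + 1)"
    unfolding e1 e2 using f1 by (simp add: card_insert_if)
  finally show ?thesis by simp
qed

definition "K T = card (pset T (orbs S f - {orbit f a}))"

lemma pot_f: "pot S T f = K T + ind (card (orbit f a \<inter> T))"
proof -
  have "orbs S f = insert (orbit f a) (orbs S f - {orbit f a})" using orbs_in[OF aS] by auto
  then have "pot S T f = card (pset T (insert (orbit f a) (orbs S f - {orbit f a})))"
    by (simp add: pot_def)
  also have "\<dots> = K T + ind (card (orbit f a \<inter> T))"
    by (subst card_pset_insert) (auto simp: finite_orbs fS K_def)
  finally show ?thesis .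
qed

lemma pot_s: "pot S (T - {a,b}) \<sigma> = K T + ind (card (orbit \<sigma> a \<inter> (T - {a,b}))) + ind (card (orbit \<sigma> b \<inter> (T - {a,b})))"
proof -
  have fr: "finite (orbs S f - {orbit f a})" by (simp add: finite_orbs fS)
  have "pot S (T - {a,b}) \<sigma> = card (pset (T - {a,b}) (insert (orbit \<sigma> a) (insert (orbit \<sigma> b) (orbs S f - {orbit f a}))))"
    by (simp add: pot_def orbs_split)
  also have "\<dots> = card (pset (T - {a,b}) (orbs S f - {orbit f a})) + ind (card (orbit \<sigma> b \<inter> (T - {a,b}))) + ind (card (orbit \<sigma> a \<inter> (T - {a,b})))"
    using Pa_notin Pb_notin Pa_ne_Pb fr by (simp add: card_pset_insert)
  also have "pset (T - {a,b}) (orbs S f - {orbit f a}) = pset T (orbs S f - {orbit f a})"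
    by (rule pset_cong) (use rest_avoid in blast)
  finally show ?thesis by (simp add: K_def)
qed

end

context tsetup
begin

lemma merge_b:
  assumes nb: "b \<notin> orbit f a"
  shows "b \<in> orbit \<sigma> a"
proof -
  define q where "q = funpow_dist1 f b b"
  have bb: "b \<in> orbit f b" by (rule orbit_self[OF perm_f])
  have na: "a \<notin> orbit f b" using nb orbit_same[OF perm_f, of a b] orbit_self[OF perm_f, of a] bb by auto
  have it: "i < q \<Longrightarrow> (\<sigma> ^^ Suc i) a = (f ^^ Suc i) b" for i
  proof (induction i)
    case 0 then show ?case by (simp add: \<sigma>_def)
  next
    case (Suc i)
    then have ih: "(\<sigma> ^^ Suc i) a = (f ^^ Suc i) b" by simp
    have n1: "(f ^^ Suc i) b \<noteq> a" using na funpow_in_orbit[OF bb, of "Suc i"] by auto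
    have n2: "(f ^^ Suc i) b \<noteq> b" using funpow_dist1_least[of "Suc i" f b b] Suc.prems by (simp add: q_def)
    have "\<sigma> ((\<sigma> ^^ Suc i) a) = (f ^^ Suc (Suc i)) b" using ih n1 n2 by (simp add: \<sigma>_def)
    then show ?case by simp
  qed
  have q0: "0 < q" by (simp add: q_def)
  have "(\<sigma> ^^ q) a = b"
    using it[of "q - 1"] q0 funpow_dist1_prop[OF bb] by (simp add: q_def)
  then show ?thesis using q0 by (auto simp: orbit_altdef intro!: exI[of _ q])
qed

lemma pot_merge:
  assumes nb: "b \<notin> orbit f a" and T: "a \<in> T" "b \<in> T"
  shows "pot S (T - {a,b}) \<sigma> \<le> pot S T f"
proof -
  interpret s: tsplit S \<sigma> a b
    by unfold_locales (use fS sp aS bS ab merge_b[OF nb] in auto)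
  have ss: "s.\<sigma> = f" unfolding s.\<sigma>_def by (simp add: \<sigma>_def fun_eq_iff)
  have fr: "finite (orbs S \<sigma> - {orbit \<sigma> a})" by (simp add: finite_orbs fS)
  have fA: "f = s.\<sigma>" using ss by simp
  note sp1 = s.orbs_split[folded fA] s.Pa_notin[folded fA] s.Pb_notin[folded fA] s.Pa_ne_Pb[folded fA]
  have "pot S T f = card (pset T (orbs S \<sigma> - {orbit \<sigma> a})) + ind (card (orbit f b \<inter> T)) + ind (card (orbit f a \<inter> T))"
    unfolding pot_def sp1(1) using sp1 fr by (simp add: card_pset_insert)
  moreover have "pot S (T - {a,b}) \<sigma> = card (pset T (orbs S \<sigma> - {orbit \<sigma> a})) + ind (card (orbit \<sigma> a \<inter> (T - {a,b})))"
  proof -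
    have "pot S (T - {a,b}) \<sigma> = s.K (T - {a,b}) + ind (card (orbit \<sigma> a \<inter> (T - {a,b})))"
      by (rule s.pot_f)
    moreover have "s.K (T - {a,b}) = card (pset T (orbs S \<sigma> - {orbit \<sigma> a}))"
      unfolding s.K_def by (rule arg_cong[where f=card], rule pset_cong) (use s.rest_avoid in blast)
    ultimately show ?thesis by simp
  qed
  moreover have "card (orbit \<sigma> a \<inter> T) = card (orbit f a \<inter> (T - {a,b})) + card (orbit f b \<inter> (T - {a,b})) + 2"
    using s.card_split[OF T] fA by simp
  moreover have "card (orbit f a \<inter> T) = card (orbit f a \<inter> (T - {a,b})) + 1"
    "card (orbit f b \<inter> T) = card (orbit f b \<inter> (T - {a,b})) + 1"
  proof -
    have fa: "finite (orbit f a)" "finite (orbit f b)"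
      using permutes_orbit_subset[OF fp aS] permutes_orbit_subset[OF fp bS] fS finite_subset by blast+
    have aa: "a \<in> orbit f a" and bb: "b \<in> orbit f b" using orbit_self[OF perm_f] by auto
    have na: "a \<notin> orbit f b" using nb orbit_same[OF perm_f, of a b] aa bb by auto
    have "orbit f a \<inter> T = insert a (orbit f a \<inter> (T - {a,b}))" using aa nb T by auto
    then show "card (orbit f a \<inter> T) = card (orbit f a \<inter> (T - {a,b})) + 1" using fa by simp
    have "orbit f b \<inter> T = insert b (orbit f b \<inter> (T - {a,b}))" using bb na T by auto
    then show "card (orbit f b \<inter> T) = card (orbit f b \<inter> (T - {a,b})) + 1" using fa by simp
  qed
  moreover have "card (orbit \<sigma> a \<inter> T) = card (orbit \<sigma> a \<inter> (T - {a,b})) + 2"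
  proof -
    have fa: "finite (orbit \<sigma> a)" using permutes_orbit_subset[OF sp aS] fS finite_subset by blast
    have "orbit \<sigma> a \<inter> T = insert a (insert b (orbit \<sigma> a \<inter> (T - {a,b})))"
      using merge_b[OF nb] orbit_self[OF perm_s, of a] T by auto
    then show ?thesis using fa ab by (simp add: card_insert_if)
  qed
  ultimately show ?thesis by (auto simp: ind_def)
qed

end



lemma sum_ind: "(\<Sum>i<n. real (ind i)) = real (min n 3)"
  by (induction n) (auto simp: ind_def)

lemma ind01: "ind n = 0 \<or> ind n = 1" by (simp add: ind_def)

lemma term_bound: "(5/4::real) ^ (u + v) \<le> 1 + 9/32 * real u + 9/32 * real v"
  if "u = 0 \<or> u = 1" "v = 0 \<or> v = 1"
  using that by auto

lemma numeric:
  "(\<Sum>i<n. (5/4::real) ^ (ind (n - Suc i) + ind i)) \<le> real (n + 2) * (5/4) ^ ind (n + 1)"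
proof (cases "n \<le> 1")
  case True
  then have "n = 0 \<or> n = 1" by auto
  then show ?thesis by (auto simp: ind_def)
next
  case False
  have "(\<Sum>i<n. (5/4::real) ^ (ind (n - Suc i) + ind i)) \<le>
      (\<Sum>i<n. 1 + 9/32 * real (ind (n - Suc i)) + 9/32 * real (ind i))"
    by (rule sum_mono) (rule term_bound; rule ind01)
  also have "\<dots> = real n + 9/32 * (\<Sum>i<n. real (ind (n - Suc i))) + 9/32 * (\<Sum>i<n. real (ind i))"
    by (simp add: sum.distrib sum_distrib_left)
  also have "(\<Sum>i<n. real (ind (n - Suc i))) = (\<Sum>i<n. real (ind i))"
    by (rule sum.nat_diff_reindex)
  finally have "(\<Sum>i<n. (5/4::real) ^ (ind (n - Suc i) + ind i)) \<le> real n + 9/16 * real (min n 3)"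
    by (simp add: sum_ind)
  also have "\<dots> \<le> real (n + 2)" by simp
  finally show ?thesis using False by (simp add: ind_def)
qed

lemma rank_bij:
  fixes D :: "nat set"
  assumes "finite D"
  shows "bij_betw (\<lambda>j. card {i\<in>D. i < j}) D {..<card D}"
proof -
  have inj: "inj_on (\<lambda>j. card {i\<in>D. i < j}) D"
  proof (rule inj_onI, rule ccontr)
    fix j1 j2 assume j: "j1 \<in> D" "j2 \<in> D" "card {i\<in>D. i < j1} = card {i\<in>D. i < j2}" "j1 \<noteq> j2"
    { fix u v assume uv: "u \<in> D" "v \<in> D" "u < v"
      have "{i\<in>D. i < u} \<subset> {i\<in>D. i < v}" using uv by auto
      then have "card {i\<in>D. i < u} < card {i\<in>D. i < v}"
        by (rule psubset_card_mono[rotated]) (use assms in simp) }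
    note lt = this
    show False using j lt[of j1 j2] lt[of j2 j1] by (cases "j1 < j2") auto
  qed
  have sub: "(\<lambda>j. card {i\<in>D. i < j}) ` D \<subseteq> {..<card D}"
  proof
    fix y assume "y \<in> (\<lambda>j. card {i\<in>D. i < j}) ` D"
    then obtain j where j: "j \<in> D" "y = card {i\<in>D. i < j}" by auto
    have "{i\<in>D. i < j} \<subset> D" using j by auto
    then have "card {i\<in>D. i < j} < card D" using assms by (rule psubset_card_mono[rotated])
    then show "y \<in> {..<card D}" using j by simp
  qed
  have "card ((\<lambda>j. card {i\<in>D. i < j}) ` D) = card {..<card D}"
    using card_image[OF inj] by simp
  then have "(\<lambda>j. card {i\<in>D. i < j}) ` D = {..<card D}"
    using sub by (intro card_subset_eq) auto
  then show ?thesis using inj by (simp add: bij_betw_def)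
qed



context tsplit
begin

lemma pot_s_final:
  assumes "a \<in> T" "b \<in> T"
  shows "pot S (T-{a,b}) (f \<circ> transpose a b) = card (pset T (orbs S f - {orbit f a}))
     + ind (card (orbit f a \<inter> T) - 2 - card {i\<in>{1..<funpow_dist1 f a a}. (f^^i) a \<in> T \<and> i < d})
     + ind (card {i\<in>{1..<funpow_dist1 f a a}. (f^^i) a \<in> T \<and> i < d})"
  using pot_s[of T] card_split[OF assms] card_Pb_T[of T]
  by (simp add: K_def \<sigma>_def p_def g_def)

end

lemma pot_f_gen:
  assumes "finite S" "a \<in> S"
  shows "pot S T f = card (pset T (orbs S f - {orbit f a})) + ind (card (orbit f a \<inter> T))"
proof -
  have "orbs S f = insert (orbit f a) (orbs S f - {orbit f a})" using orbs_in[OF assms(2)] by auto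
  then have "pot S T f = card (pset T (insert (orbit f a) (orbs S f - {orbit f a})))"
    by (simp add: pot_def)
  also have "\<dots> = card (pset T (orbs S f - {orbit f a})) + ind (card (orbit f a \<inter> T))"
    by (subst card_pset_insert) (auto simp: finite_orbs assms)
  finally show ?thesis .
qed

lemma key:
  fixes S T :: "'a set"
  assumes fS: "finite S" and fp: "f permutes S" and TS: "T \<subseteq> S" and aT: "a \<in> T"
  shows "(\<Sum>b\<in>T-{a}. (5/4::real) ^ pot S (T-{a,b}) (f \<circ> transpose a b))
     \<le> real (card T + 1) * (5/4) ^ pot S T f"
proof -
  define X :: real where "X = 5/4"
  define A where "A = orbit f a"
  define P where "P = pot S T f"
  define K0 where "K0 = card (pset T (orbs S f - {A}))"
  define L where "L = card (A \<inter> T)"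
  define p where "p = funpow_dist1 f a a"
  define g where "g j = (f^^j) a" for j
  define D where "D = {j\<in>{1..<p}. g j \<in> T}"
  have aS: "a \<in> S" using aT TS by auto
  have fT: "finite T" using fS TS finite_subset by blast
  have perm: "permutation f" using fS fp permutation_permutes by blast
  have aA: "a \<in> A" unfolding A_def by (rule orbit_self[OF perm])
  have AS: "A \<subseteq> S" unfolding A_def by (rule permutes_orbit_subset[OF fp aS])
  have PK: "P = K0 + ind L" unfolding P_def K0_def L_def A_def by (rule pot_f_gen[OF fS aS])
  have Aimg: "A = g ` {0..<p}" unfolding A_def g_def p_def
    by (rule orbit_conv_funpow_dist1[OF orbit_self[OF perm]])
  have ginj: "inj_on g {0..<p}" unfolding g_def p_def
    by (rule inj_on_funpow_dist1[OF orbit_self[OF perm]])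
  have g0: "g 0 = a" by (simp add: g_def)
  have p0: "0 < p" by (simp add: p_def)
  have gDinj: "inj_on g D" by (rule inj_on_subset[OF ginj]) (auto simp: D_def)
  have AT: "A \<inter> T - {a} = g ` D"
  proof (intro set_eqI iffI)
    fix y assume y: "y \<in> A \<inter> T - {a}"
    then obtain j where j: "j < p" "y = g j" using Aimg by auto
    have "j \<noteq> 0" proof assume "j = 0" then show False using y j g0 by auto qed
    then have "j \<in> D" using j y by (simp add: D_def)
    then show "y \<in> g ` D" using j by blast
  next
    fix y assume "y \<in> g ` D"
    then obtain j where j: "1 \<le> j" "j < p" "g j \<in> T" "y = g j" by (auto simp: D_def)
    have "g j \<noteq> a" using inj_onD[OF ginj, of j 0] g0 j p0 by auto
    then show "y \<in> A \<inter> T - {a}" using j Aimg by auto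
  qed
  have fD: "finite D" by (simp add: D_def)
  have LD: "L = card D + 1"
  proof -
    have "A \<inter> T = insert a (g ` D)" using AT aA aT by auto
    moreover have "a \<notin> g ` D" using AT by auto
    ultimately show ?thesis unfolding L_def using card_image[OF gDinj] fD by simp
  qed
  have split: "T - {a} = (T - A) \<union> (A \<inter> T - {a})" using aA by auto
  have disj: "(T - A) \<inter> (A \<inter> T - {a}) = {}" by auto
  have "(\<Sum>b\<in>T-{a}. X ^ pot S (T-{a,b}) (f \<circ> transpose a b)) =
      (\<Sum>b\<in>T - A. X ^ pot S (T-{a,b}) (f \<circ> transpose a b)) +
      (\<Sum>b\<in>A \<inter> T - {a}. X ^ pot S (T-{a,b}) (f \<circ> transpose a b))"
    unfolding split using fT disj by (intro sum.union_disjoint) auto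
  also have "(\<Sum>b\<in>T - A. X ^ pot S (T-{a,b}) (f \<circ> transpose a b)) \<le> real (card (T - A)) * X ^ P"
  proof (rule sum_bounded_above[where K="X ^ P", simplified])
    fix b assume b: "b \<in> T - A"
    then have ba: "b \<noteq> a" using aA by auto
    interpret tsetup S f a b using fS fp aS b TS ba by unfold_locales auto
    have "pot S (T-{a,b}) \<sigma> \<le> P" unfolding P_def
      by (rule pot_merge) (use b aT A_def in auto)
    then show "X ^ pot S (T-{a,b}) (f \<circ> transpose a b) \<le> X ^ P"
      by (simp add: \<sigma>_def X_def power_increasing)
  qed
  also have "(\<Sum>b\<in>A \<inter> T - {a}. X ^ pot S (T-{a,b}) (f \<circ> transpose a b))
      = (\<Sum>j\<in>D. X ^ pot S (T-{a,g j}) (f \<circ> transpose a (g j)))"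
    unfolding AT by (rule sum.reindex[OF gDinj, unfolded comp_def])
  also have "\<dots> = (\<Sum>j\<in>D. X ^ K0 * X ^ (ind (card D - Suc (card {i\<in>D. i < j})) + ind (card {i\<in>D. i < j})))"
  proof (rule sum.cong[OF refl])
    fix j assume j: "j \<in> D"
    then have j1: "1 \<le> j" "j < p" "g j \<in> T" by (auto simp: D_def)
    have gja: "g j \<noteq> a" using inj_onD[OF ginj, of j 0] g0 j1 p0 by auto
    have gjA: "g j \<in> A" using Aimg j1 by auto
    interpret s: tsplit S f a "g j"
      using fS fp aS gja gjA AS by unfold_locales (auto simp: A_def)
    have dj: "s.d = j" using s.d_unique[of j] j1 by (simp add: s.p_def s.g_def p_def g_def)
    have "pot S (T-{a,g j}) (f \<circ> transpose a (g j)) = K0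
       + ind (L - 2 - card {i\<in>D. i < j}) + ind (card {i\<in>D. i < j})"
      using s.pot_s_final[OF aT j1(3)] unfolding dj
      by (simp add: K0_def L_def A_def D_def p_def g_def conj_commute)
    moreover have "L - 2 - card {i\<in>D. i < j} = card D - Suc (card {i\<in>D. i < j})" using LD by simp
    ultimately show "X ^ pot S (T-{a,g j}) (f \<circ> transpose a (g j)) =
        X ^ K0 * X ^ (ind (card D - Suc (card {i\<in>D. i < j})) + ind (card {i\<in>D. i < j}))"
      by (simp add: power_add)
  qed
  also have "\<dots> = X ^ K0 * (\<Sum>j\<in>D. X ^ (ind (card D - Suc (card {i\<in>D. i < j})) + ind (card {i\<in>D. i < j})))"
    by (simp add: sum_distrib_left)
  also have "(\<Sum>j\<in>D. X ^ (ind (card D - Suc (card {i\<in>D. i < j})) + ind (card {i\<in>D. i < j})))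
      = (\<Sum>i<card D. X ^ (ind (card D - Suc i) + ind i))"
    by (rule sum.reindex_bij_betw[OF rank_bij[OF fD], where g="\<lambda>i. X ^ (ind (card D - Suc i) + ind i)"])
  also have "\<dots> \<le> real (card D + 2) * X ^ ind (card D + 1)"
    unfolding X_def by (rule numeric)
  finally have "(\<Sum>b\<in>T-{a}. X ^ pot S (T-{a,b}) (f \<circ> transpose a b))
      \<le> real (card (T - A)) * X ^ P + X ^ K0 * (real (card D + 2) * X ^ ind (card D + 1))"
    by (simp add: X_def comp_def)
  also have "\<dots> = real (card (T - A) + L + 1) * X ^ P"
    by (simp add: PK LD power_add algebra_simps)
  also have "card (T - A) + L = card T"
  proof -
    have "T = (T - A) \<union> (A \<inter> T)" by auto
    then have "card T = card (T - A) + card (A \<inter> T)"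
      using fT by (metis card_Un_disjoint finite_Diff finite_Int Diff_disjoint inf_commute Int_Diff_disjoint inf.commute)
    then show ?thesis by (simp add: L_def)
  qed
  finally show ?thesis by (simp add: X_def P_def comp_def)
qed



lemma main:
  assumes "finite S" "f permutes S" "T \<subseteq> S"
  shows "(\<Sum>\<alpha>\<in>MS T. (5/4::real) ^ card (orbs S (f \<circ> \<alpha>)))
     \<le> real (card (MS T)) * real (card T + 1) * (5/4) ^ pot S T f"
  using assms
proof (induction "card T" arbitrary: T f rule: less_induct)
  case less
  have fT: "finite T" using less.prems finite_subset by blast
  show ?case
  proof (cases "T = {}")
    case True
    have "pset {} (orbs S f) = orbs S f" by (auto simp: pset_def)
    then show ?thesis using True by (simp add: MS_empty pot_def)
  next
    case False
    then obtain a where aT: "a \<in> T" by auto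
    show ?thesis
    proof (cases "card T = 1")
      case True
      then have "T - {a} = {}" using aT fT by (metis card_1_singletonE Diff_cancel singletonD)
      have "(\<Sum>\<alpha>\<in>MS T. (5/4::real) ^ card (orbs S (f \<circ> \<alpha>))) =
         (\<Sum>b\<in>T-{a}. \<Sum>\<alpha>'\<in>MS (T-{a,b}). (5/4::real) ^ card (orbs S (f \<circ> (transpose a b \<circ> \<alpha>'))))"
        by (rule sum_MS[OF fT aT])
      then have "(\<Sum>\<alpha>\<in>MS T. (5/4::real) ^ card (orbs S (f \<circ> \<alpha>))) = 0"
        using \<open>T - {a} = {}\<close> by simp
      then show ?thesis by simp
    next
      case c1: False
      have cT2: "2 \<le> card T" proof -
        have "0 < card T" using aT fT card_gt_0_iff by blast
        then show ?thesis using c1 by linarith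
      qed
      define m where "m = card T - 2"
      have cm: "card T = Suc (Suc m)" using cT2 by (simp add: m_def)
      have "(\<Sum>\<alpha>\<in>MS T. (5/4::real) ^ card (orbs S (f \<circ> \<alpha>))) =
          (\<Sum>b\<in>T-{a}. \<Sum>\<alpha>'\<in>MS (T-{a,b}). (5/4::real) ^ card (orbs S ((f \<circ> transpose a b) \<circ> \<alpha>')))"
        using sum_MS[OF fT aT] by (simp add: comp_assoc)
      also have "\<dots> \<le> (\<Sum>b\<in>T-{a}. real (dfact m) * real (Suc m) * (5/4::real) ^ pot S (T-{a,b}) (f \<circ> transpose a b))"
      proof (rule sum_mono)
        fix b assume b: "b \<in> T - {a}"
        have cb: "card (T-{a,b}) = m" using b aT fT cm
          by (auto simp: card_Diff_subset card_insert_if)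
        have lt: "card (T-{a,b}) < card T" using cb cm by simp
        have pb: "f \<circ> transpose a b permutes S"
          using less.prems b aT by (intro permutes_compose permutes_swap_id) auto
        have "(\<Sum>\<alpha>'\<in>MS (T-{a,b}). (5/4::real) ^ card (orbs S ((f \<circ> transpose a b) \<circ> \<alpha>')))
            \<le> real (card (MS (T-{a,b}))) * real (card (T-{a,b}) + 1) * (5/4) ^ pot S (T-{a,b}) (f \<circ> transpose a b)"
          using less.hyps[OF lt less.prems(1) pb] less.prems(3) by auto
        also have "card (MS (T-{a,b})) = dfact m" using card_MS[of "T-{a,b}"] fT cb by simp
        finally show "(\<Sum>\<alpha>'\<in>MS (T-{a,b}). (5/4::real) ^ card (orbs S ((f \<circ> transpose a b) \<circ> \<alpha>')))
            \<le> real (dfact m) * real (Suc m) * (5/4::real) ^ pot S (T-{a,b}) (f \<circ> transpose a b)"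
          using cb by (simp add: comp_def)
      qed
      also have "\<dots> = real (dfact m) * real (Suc m) * (\<Sum>b\<in>T-{a}. (5/4::real) ^ pot S (T-{a,b}) (f \<circ> transpose a b))"
        by (simp add: sum_distrib_left)
      also have "\<dots> \<le> real (dfact m) * real (Suc m) * (real (card T + 1) * (5/4) ^ pot S T f)"
        by (rule mult_left_mono[OF key[OF less.prems aT]]) simp
      also have "\<dots> = real (card (MS T)) * real (card T + 1) * (5/4) ^ pot S T f"
        using card_MS[OF fT] cm by (simp add: algebra_simps)
      finally show ?thesis .
    qed
  qed
qed

lemma card_orbit_2:
  assumes "finite S" "\<alpha> permutes S" "x \<in> S"
  shows "card (orbit \<alpha> x) = 2 \<longleftrightarrow> \<alpha> x \<noteq> x \<and> \<alpha> (\<alpha> x) = x"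
proof
  assume h: "\<alpha> x \<noteq> x \<and> \<alpha> (\<alpha> x) = x"
  then have "(\<alpha> ^^ 2) x = x" by (simp add: numeral_2_eq_2)
  then have "orbit \<alpha> x = {(\<alpha> ^^ m) x | m. m < 2}" by (rule orbit_altdef_bounded) simp
  also have "\<dots> = {x, \<alpha> x}"
  proof (intro set_eqI iffI)
    fix y assume "y \<in> {(\<alpha> ^^ m) x | m. m < 2}"
    then obtain m where m: "m < 2" "y = (\<alpha> ^^ m) x" by auto
    then have "m = 0 \<or> m = 1" by auto
    then show "y \<in> {x, \<alpha> x}" using m by auto
  next
    fix y assume y: "y \<in> {x, \<alpha> x}"
    have "(\<alpha> ^^ 0) x \<in> {(\<alpha> ^^ m) x | m. m < 2}" by (rule CollectI, rule exI[of _ 0]) simp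
    moreover have "(\<alpha> ^^ 1) x \<in> {(\<alpha> ^^ m) x | m. m < 2}" by (rule CollectI, rule exI[of _ 1]) simp
    ultimately show "y \<in> {(\<alpha> ^^ m) x | m. m < 2}" using y by auto
  qed
  finally show "card (orbit \<alpha> x) = 2" using h by (auto simp: card_insert_if)
next
  assume c: "card (orbit \<alpha> x) = 2"
  have perm: "permutation \<alpha>" using assms permutation_permutes by blast
  have fo: "finite (orbit \<alpha> x)" using permutes_orbit_subset[OF assms(2,3)] assms(1) finite_subset by blast
  have x1: "x \<in> orbit \<alpha> x" by (rule permutation_self_in_orbit[OF perm])
  have x2: "\<alpha> x \<in> orbit \<alpha> x" by (rule orbit.base)
  have x3: "\<alpha> (\<alpha> x) \<in> orbit \<alpha> x" by (rule orbit.step[OF x2])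
  have ne: "\<alpha> x \<noteq> x"
  proof
    assume "\<alpha> x = x" then have "orbit \<alpha> x = {x}" by (simp add: orbit_eq_singleton_iff)
    then show False using c by simp
  qed
  moreover have "\<alpha> (\<alpha> x) = x"
  proof (rule ccontr)
    assume n: "\<alpha> (\<alpha> x) \<noteq> x"
    have "\<alpha> (\<alpha> x) \<noteq> \<alpha> x" using ne permutes_inj[OF assms(2)] by (metis injD)
    then have "card {x, \<alpha> x, \<alpha> (\<alpha> x)} = 3" using n ne by auto
    moreover have "card {x, \<alpha> x, \<alpha> (\<alpha> x)} \<le> card (orbit \<alpha> x)"
      using x1 x2 x3 fo by (intro card_mono) auto
    ultimately show False using c by simp
  qed
  ultimately show "\<alpha> x \<noteq> x \<and> \<alpha> (\<alpha> x) = x" by simp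
qed



lemma cyc_class_2: "cyc_class N 2 = MS {1..N}"
  using card_orbit_2[of "{1..N}"] by (auto simp: cyc_class_def MS_def match_def)

lemma pot_zero:
  assumes "\<beta> \<in> cyc_class N k" "k \<ge> 3"
  shows "pot {1..N} {1..N} \<beta> = 0"
proof -
  have "pset {1..N} (orbs {1..N} \<beta>) = {}"
  proof -
    { fix x assume x: "x \<in> {1..N}"
      have "orbit \<beta> x \<subseteq> {1..N}" using assms x by (intro permutes_orbit_subset) (auto simp: cyc_class_def)
      then have "orbit \<beta> x \<inter> {1..N} = orbit \<beta> x" by auto
      moreover have "card (orbit \<beta> x) = k" using assms x by (auto simp: cyc_class_def)
      ultimately have "\<not> card (orbit \<beta> x \<inter> {1..N}) \<le> 2" using assms by simp }
    then show ?thesis by (auto simp: pset_def orbs_def)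
  qed
  then show ?thesis by (simp add: pot_def)
qed

lemma powr_bound: "(4/5::real) ^ t \<le> (2/3) powr (real t / 2)"
proof -
  have "(4/5::real) ^ t = (4/5) powr (real t)" by (simp add: powr_realpow)
  also have "\<dots> = ((4/5) powr 2) powr (real t / 2)"
    by (subst powr_powr) simp
  also have "(4/5::real) powr 2 = 16/25" by (simp add: powr_numeral power2_eq_square)
  also have "(16/25::real) powr (real t / 2) \<le> (2/3) powr (real t / 2)"
    by (rule powr_mono2) auto
  finally show ?thesis .
qed

theorem theorem1p2:
  fixes k :: nat
  assumes "k \<ge> 3"
  shows "\<exists>C::real. \<exists>N0::nat. \<forall>N \<ge> N0. \<forall>\<beta> t. N > 0 \<longrightarrow> lcm 2 k dvd N \<longrightarrow>
           \<beta> \<in> cyc_class N k \<longrightarrow> prob_cycles_ge N \<beta> t \<le> C * (2/3) powr (real t / 2) * real N"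
proof (intro exI allI impI)
  fix N :: nat and \<beta> :: "nat \<Rightarrow> nat" and t :: nat
  assume N: "N > 0" and \<beta>: "\<beta> \<in> cyc_class N k"
  define S where "S = {1..N}"
  define X :: real where "X = 5/4"
  define C where "C \<alpha> = num_cycles N (\<beta> \<circ> \<alpha>)" for \<alpha>
  have CC: "C \<alpha> = card (orbs S (\<beta> \<circ> \<alpha>))" for \<alpha> by (simp add: C_def num_cycles_def orbs_def S_def)
  have bp: "\<beta> permutes S" using \<beta> by (simp add: cyc_class_def S_def)
  have fin: "finite (MS S)" by (simp add: finite_MS S_def)
  have mainS: "(\<Sum>\<alpha>\<in>MS S. X ^ C \<alpha>) \<le> real (card (MS S)) * real (N + 1)"
    using main[of S \<beta> S] bp pot_zero[OF \<beta> assms] by (simp add: S_def X_def CC)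
  have "real (card {\<alpha> \<in> MS S. C \<alpha> \<ge> t}) * X ^ t = (\<Sum>\<alpha>\<in>{\<alpha> \<in> MS S. C \<alpha> \<ge> t}. X ^ t)"
    by simp
  also have "\<dots> \<le> (\<Sum>\<alpha>\<in>{\<alpha> \<in> MS S. C \<alpha> \<ge> t}. X ^ C \<alpha>)"
    by (rule sum_mono) (simp add: X_def power_increasing)
  also have "\<dots> \<le> (\<Sum>\<alpha>\<in>MS S. X ^ C \<alpha>)"
    by (rule sum_mono2[OF fin]) (auto simp: X_def)
  also note mainS
  finally have mk: "real (card {\<alpha> \<in> MS S. C \<alpha> \<ge> t}) * X ^ t \<le> real (card (MS S)) * real (N + 1)" .
  have pr: "prob_cycles_ge N \<beta> t = real (card {\<alpha> \<in> MS S. C \<alpha> \<ge> t}) / real (card (MS S))"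
    by (simp add: prob_cycles_ge_def cyc_class_2 S_def C_def)
  have rhs0: "0 \<le> 2 * (2/3) powr (real t / 2) * real N" by simp
  show "prob_cycles_ge N \<beta> t \<le> 2 * (2/3) powr (real t / 2) * real N"
  proof (cases "card (MS S) = 0")
    case True then show ?thesis using rhs0 by (simp add: pr)
  next
    case False
    have Xt: "X ^ t > 0" by (simp add: X_def)
    have "prob_cycles_ge N \<beta> t \<le> real (N + 1) / X ^ t"
      unfolding pr using mk False Xt by (simp add: divide_simps mult.commute)
    also have "real (N + 1) / X ^ t = real (N + 1) * (4/5) ^ t"
      by (simp add: X_def power_divide)
    also have "\<dots> \<le> (2 * real N) * (2/3) powr (real t / 2)"
      by (rule mult_mono[OF _ powr_bound]) (use N in auto)
    finally show ?thesis by (simp add: mult_ac)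
  qed
qed


end
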